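(* For each site $j\in\mathbb{Z}^d$ let $(\lambda_j(k))_{k\ge-1}$ be a probability distribution on $\{-1,0,1,\dots\}$ with $\sup_j\sum_{k\ge0}|V_j(k)|\lambda_j(k)<1$. Enumerate its values as $-1,0,1,\dots$ and let $0=\theta_j(1)\le\theta_j(2)\le\cdots$ be the corresponding cumulative boundaries, $\theta_j(l+1)=\theta_j(l)+\lambda_j(l-2)$, so that $[0,1)=\bigcup_{l\ge1}[\theta_j(l),\theta_j(l+1))$. Let $(Y_r)_{r\ge1}$ be i.i.d. fair Bernoulli variables, $S_m=\sum_{r=1}^m2^{-r}Y_r$, $J_j(x)=\sup\{l\ge1:\theta_j(l)\le x\}$, and $$N(j)=\inf\{m\ge1: J_j(S_m)=J_j(S_{m'})\text{ for all }m'\ge m\}.$$ Then $\sup_{j\in\mathbb{Z}^d}E[N(j)]<\infty$.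
   Context: $V_j(k)=\{i\in\mathbb{Z}^d:\sum_u|i_u-j_u|\le k\}$ for $k\ge0$. $N(j)$ is the number of fair coin flips needed to determine, by binary expansion of a uniform variable, the sample of a random variable with law $\lambda_j$. *)

theory Defs
  imports "HOL-Probability.Probability"
begin

definition Vball :: "int ^ 'd \<Rightarrow> nat \<Rightarrow> (int ^ 'd) set" where
  "Vball j k = {i. (\<Sum>u\<in>UNIV. \<bar>i $ u - j $ u\<bar>) \<le> int k}"

text \<open>Cumulative boundaries: theta(1) = 0, theta(l+1) = theta(l) + lambda(l-2).
  The index 0 is unused.\<close>
fun theta :: "(int \<Rightarrow> real) \<Rightarrow> nat \<Rightarrow> real" where
  "theta p 0 = 0"
| "theta p (Suc 0) = 0"
| "theta p (Suc (Suc l)) = theta p (Suc l) + p (int (Suc l) - 2)"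

definition Jidx :: "(int \<Rightarrow> real) \<Rightarrow> real \<Rightarrow> nat" where
  "Jidx p x = Sup {l. 1 \<le> l \<and> theta p l \<le> x}"

definition Spart :: "(nat \<Rightarrow> 'a \<Rightarrow> bool) \<Rightarrow> nat \<Rightarrow> 'a \<Rightarrow> real" where
  "Spart Y m \<omega> = (\<Sum>r\<in>{1..m}. (1/2) ^ r * of_bool (Y r \<omega>))"

text \<open>N = inf {m >= 1. J(S_m) = J(S_m') for all m' >= m}, with inf of the empty set = infinity.\<close>
definition Ncoin :: "(int \<Rightarrow> real) \<Rightarrow> (nat \<Rightarrow> 'a \<Rightarrow> bool) \<Rightarrow> 'a \<Rightarrow> enat" where
  "Ncoin p Y \<omega> = Inf {enat m | m. 1 \<le> m \<and>
      (\<forall>m'\<ge>m. Jidx p (Spart Y m \<omega>) = Jidx p (Spart Y m' \<omega>))}"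

end

theory Submission
  imports Defs
begin
lemma theta_Suc: "theta p (Suc l) = (\<Sum>i<l. p (int i - 1))"
proof (induction l)
  case 0 then show ?case by simp
next
  case (Suc l)
  have "int (Suc l) - 2 = int l - 1" by simp
  then show ?case using Suc by simp
qed

lemma pmf_shift_sums:
  fixes q :: "int pmf"
  assumes supp: "set_pmf q \<subseteq> {-1..}"
  shows "(\<lambda>i. pmf q (int i - 1)) sums 1"
proof -
  have inj: "inj_on (\<lambda>i::nat. int i - 1) UNIV" by (auto simp: inj_on_def)
  have rng: "range (\<lambda>i::nat. int i - 1) = {-1..}"
  proof
    show "{-1..} \<subseteq> range (\<lambda>i::nat. int i - 1)"
    proof
      fix x :: int assume "x \<in> {-1..}"
      then have "x = int (nat (x+1)) - 1" by auto
      then show "x \<in> range (\<lambda>i::nat. int i - 1)" by blast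
    qed
  qed auto
  have "(\<Sum>i. ennreal (pmf q (int i - 1))) = (\<integral>\<^sup>+i. pmf q (int i - 1) \<partial>count_space UNIV)"
    by (simp add: nn_integral_count_space_nat)
  also have "\<dots> = emeasure (measure_pmf q) {-1..}"
    using nn_integral_pmf'[OF inj, of q] rng by simp
  also have "\<dots> = 1"
    using supp by (simp add: measure_pmf.emeasure_eq_1_AE AE_measure_pmf_iff subset_eq)
  finally have "(\<Sum>i. ennreal (pmf q (int i - 1))) = ennreal 1" by simp
  then have "(\<lambda>i. ennreal (pmf q (int i - 1))) sums ennreal 1"
    by (metis summableI summable_sums)
  then show ?thesis by (simp del: ennreal_1)
qed

lemma theta_nonneg: "theta (pmf q) l \<ge> 0"
  by (cases l) (auto simp: theta_Suc intro: sum_nonneg)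

lemma theta_mono_Suc: "theta (pmf q) l \<le> theta (pmf q) (Suc l)"
  by (cases l) (auto simp: theta_Suc)

lemma theta_mono: "l \<le> l' \<Longrightarrow> theta (pmf q) l \<le> theta (pmf q) l'"
  by (rule monoD[OF incseq_SucI]) (auto intro: theta_mono_Suc)

lemma theta_tail:
  fixes q :: "int pmf"
  assumes supp: "set_pmf q \<subseteq> {-1..}"
  shows "(\<lambda>k. pmf q (int (k + l))) sums (1 - theta (pmf q) (Suc (Suc l)))"
proof -
  have "(\<lambda>n. pmf q (int (n + Suc l) - 1)) sums (1 - (\<Sum>i<Suc l. pmf q (int i - 1)))"
    by (rule sums_split_initial_segment[OF pmf_shift_sums[OF supp]])
  moreover have "\<And>n. int (n + Suc l) - 1 = int (n + l)" by simp
  ultimately show ?thesis by (simp only: theta_Suc)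
qed

lemma theta_le1:
  fixes q :: "int pmf"
  assumes supp: "set_pmf q \<subseteq> {-1..}"
  shows "theta (pmf q) l \<le> 1"
proof -
  have "theta (pmf q) l \<le> theta (pmf q) (Suc (Suc l))" using theta_mono[of l "Suc (Suc l)" q] by simp
  moreover have "0 \<le> 1 - theta (pmf q) (Suc (Suc l))"
    by (rule sums_le[OF _ sums_zero theta_tail[OF supp, of l]]) simp
  ultimately show ?thesis by linarith
qed

lemma theta_exceeds:
  fixes q :: "int pmf"
  assumes supp: "set_pmf q \<subseteq> {-1..}" and x: "x < 1"
  shows "\<exists>l. x < theta (pmf q) l"
proof -
  have "(\<lambda>n. \<Sum>i<n. pmf q (int i - 1)) \<longlonglongrightarrow> 1"
    using pmf_shift_sums[OF supp] by (simp add: sums_def)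
  then have "eventually (\<lambda>n. x < (\<Sum>i<n. pmf q (int i - 1))) sequentially"
    using x by (rule order_tendstoD)
  then obtain n where "x < (\<Sum>i<n. pmf q (int i - 1))" by (auto simp: eventually_sequentially)
  then show ?thesis by (intro exI[of _ "Suc n"]) (simp add: theta_Suc)
qed

lemma Jidx_props:
  fixes q :: "int pmf"
  assumes supp: "set_pmf q \<subseteq> {-1..}" and x: "0 \<le> x" "x < 1"
  shows "1 \<le> Jidx (pmf q) x" "theta (pmf q) (Jidx (pmf q) x) \<le> x"
    "\<And>l. 1 \<le> l \<Longrightarrow> theta (pmf q) l \<le> x \<Longrightarrow> l \<le> Jidx (pmf q) x"
proof -
  let ?L = "{l. 1 \<le> l \<and> theta (pmf q) l \<le> x}"
  obtain l0 where l0: "x < theta (pmf q) l0" using theta_exceeds[OF supp x(2)] by blast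
  have fin: "finite ?L"
  proof (rule finite_subset[of _ "{..<l0}"])
    show "?L \<subseteq> {..<l0}"
    proof
      fix l assume "l \<in> ?L"
      then have "theta (pmf q) l \<le> x" by simp
      then have "\<not> l0 \<le> l" using theta_mono[of l0 l q] l0 by linarith
      then show "l \<in> {..<l0}" by simp
    qed
  qed simp
  have ne: "1 \<in> ?L" using x by simp
  have J: "Jidx (pmf q) x = Max ?L"
    unfolding Jidx_def using fin ne by (subst cSup_eq_Max) auto
  have "Max ?L \<in> ?L" using fin ne by (intro Max_in) auto
  then show "1 \<le> Jidx (pmf q) x" "theta (pmf q) (Jidx (pmf q) x) \<le> x" using J by auto
  show "\<And>l. 1 \<le> l \<Longrightarrow> theta (pmf q) l \<le> x \<Longrightarrow> l \<le> Jidx (pmf q) x"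
    using J fin by (auto intro: Max_ge)
qed

lemma Jidx_diff:
  fixes q :: "int pmf"
  assumes supp: "set_pmf q \<subseteq> {-1..}" and xy: "0 \<le> x" "x \<le> y" "y < 1"
    and ne: "Jidx (pmf q) x \<noteq> Jidx (pmf q) y"
  shows "\<exists>l. x < theta (pmf q) l \<and> theta (pmf q) l \<le> y"
proof (rule ccontr)
  assume H: "\<not> ?thesis"
  let ?l = "Jidx (pmf q) y"
  have y0: "0 \<le> y" "x < 1" using xy by auto
  have "theta (pmf q) ?l \<le> y" "1 \<le> ?l" using Jidx_props[OF supp y0(1) xy(3)] by auto
  have "theta (pmf q) ?l \<le> x"
  proof (rule ccontr)
    assume "\<not> theta (pmf q) ?l \<le> x"
    then have "x < theta (pmf q) ?l" by simp
    with \<open>theta (pmf q) ?l \<le> y\<close> H show False by blast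
  qed
  then have a: "?l \<le> Jidx (pmf q) x" using Jidx_props(3)[OF supp xy(1) y0(2)] \<open>1 \<le> ?l\<close> by blast
  have "theta (pmf q) (Jidx (pmf q) x) \<le> y" "1 \<le> Jidx (pmf q) x"
    using Jidx_props[OF supp xy(1) y0(2)] xy by auto
  then have "Jidx (pmf q) x \<le> ?l" using Jidx_props(3)[OF supp y0(1) xy(3)] by blast
  with a ne show False by simp
qed


lemma Spart_Suc: "Spart Y (Suc n) \<omega> = Spart Y n \<omega> + (1/2) ^ Suc n * of_bool (Y (Suc n) \<omega>)"
  unfolding Spart_def by (simp add: sum.cl_ivl_Suc)

lemma Spart_0: "Spart Y 0 \<omega> = 0"
  unfolding Spart_def by simp

lemma Spart_incr:
  "Spart Y m \<omega> \<le> Spart Y (m + d) \<omega> \<and> Spart Y (m + d) \<omega> \<le> Spart Y m \<omega> + (1/2)^m - (1/2)^(m+d)"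
proof (induction d)
  case 0 then show ?case by simp
next
  case (Suc d)
  have e: "Spart Y (Suc (m + d)) \<omega> = Spart Y (m + d) \<omega> + (1/2) ^ Suc (m + d) * of_bool (Y (Suc (m + d)) \<omega>)"
    by (rule Spart_Suc)
  have a: "0 \<le> (1/2::real) ^ Suc (m + d) * of_bool (Y (Suc (m + d)) \<omega>)" by simp
  have b: "(1/2::real) ^ Suc (m + d) * of_bool (Y (Suc (m + d)) \<omega>) \<le> (1/2) ^ Suc (m + d)" by simp
  have c: "(1/2::real) ^ (m + d) - (1/2) ^ Suc (m + d) = (1/2) ^ Suc (m + d)" by (simp add: field_simps)
  have "Spart Y m \<omega> \<le> Spart Y (Suc (m + d)) \<omega> \<and> Spart Y (Suc (m + d)) \<omega> \<le> Spart Y m \<omega> + (1/2)^m - (1/2)^(Suc (m+d))"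
    using Suc.IH e a b c by linarith
  then show ?case by simp
qed

lemma Spart_nonneg: "0 \<le> Spart Y m \<omega>"
  unfolding Spart_def by (intro sum_nonneg) simp

lemma Spart_lt1: "Spart Y m \<omega> < 1"
proof -
  have "Spart Y (0 + m) \<omega> \<le> Spart Y 0 \<omega> + (1/2)^0 - (1/2)^(0+m)" using Spart_incr[of Y 0 \<omega> m] by blast
  then have "Spart Y m \<omega> \<le> 1 - (1/2)^m" by (simp add: Spart_0)
  moreover have "(0::real) < (1/2)^m" by simp
  ultimately show ?thesis by linarith
qed

lemma Spart_mono_close:
  assumes "m \<le> m'"
  shows "Spart Y m \<omega> \<le> Spart Y m' \<omega>" "Spart Y m' \<omega> < Spart Y m \<omega> + (1/2)^m"
proof -
  obtain d where d: "m' = m + d" using assms le_Suc_ex by blast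
  have "(0::real) < (1/2)^(m+d)" by simp
  moreover have "Spart Y m \<omega> \<le> Spart Y (m+d) \<omega> \<and> Spart Y (m+d) \<omega> \<le> Spart Y m \<omega> + (1/2)^m - (1/2)^(m+d)"
    by (rule Spart_incr)
  ultimately show "Spart Y m \<omega> \<le> Spart Y m' \<omega>" "Spart Y m' \<omega> < Spart Y m \<omega> + (1/2)^m"
    unfolding d by linarith+
qed

lemma key_pointwise:
  fixes q :: "int pmf"
  assumes supp: "set_pmf q \<subseteq> {-1..}" and m: "1 \<le> m" and lt: "enat m < Ncoin (pmf q) Y \<omega>"
  shows "\<exists>l. Spart Y m \<omega> < theta (pmf q) l \<and> theta (pmf q) l < Spart Y m \<omega> + (1/2)^m"
proof (rule ccontr)
  assume H: "\<not> ?thesis"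
  have "\<forall>m'\<ge>m. Jidx (pmf q) (Spart Y m \<omega>) = Jidx (pmf q) (Spart Y m' \<omega>)"
  proof (intro allI impI)
    fix m' assume "m \<le> m'"
    note c = Spart_mono_close[OF this, of Y \<omega>]
    show "Jidx (pmf q) (Spart Y m \<omega>) = Jidx (pmf q) (Spart Y m' \<omega>)"
    proof (rule ccontr)
      assume "Jidx (pmf q) (Spart Y m \<omega>) \<noteq> Jidx (pmf q) (Spart Y m' \<omega>)"
      from Jidx_diff[OF supp Spart_nonneg c(1) Spart_lt1 this]
      obtain l where l: "Spart Y m \<omega> < theta (pmf q) l" "theta (pmf q) l \<le> Spart Y m' \<omega>" by blast
      then have "theta (pmf q) l < Spart Y m \<omega> + (1/2)^m" using c(2) by linarith
      with l(1) H show False by blast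
    qed
  qed
  then have "enat m \<in> {enat m | m. 1 \<le> m \<and>
      (\<forall>m'\<ge>m. Jidx (pmf q) (Spart Y m \<omega>) = Jidx (pmf q) (Spart Y m' \<omega>))}" using m by blast
  then have "Ncoin (pmf q) Y \<omega> \<le> enat m" unfolding Ncoin_def by (rule Inf_lower)
  with lt show False by simp
qed


lemma Y_meas:
  assumes M: "prob_space M"
    and indep: "prob_space.indep_vars M (\<lambda>_. measure_pmf (bernoulli_pmf (1/2))) Y {1..}"
    and r: "1 \<le> r"
  shows "Y r \<in> measurable M (count_space UNIV)"
proof -
  interpret prob_space M by (rule M)
  have "Y r \<in> measurable M (measure_pmf (bernoulli_pmf (1/2)))"
    using indep r unfolding indep_vars_def by auto
  then show ?thesis by simp
qed

lemma Spart_meas: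
  assumes M: "prob_space M"
    and indep: "prob_space.indep_vars M (\<lambda>_. measure_pmf (bernoulli_pmf (1/2))) Y {1..}"
  shows "Spart Y m \<in> borel_measurable M"
proof -
  have "\<And>r. r \<in> {1..m} \<Longrightarrow> (\<lambda>\<omega>. (1/2::real) ^ r * of_bool (Y r \<omega>)) \<in> borel_measurable M"
  proof -
    fix r assume "r \<in> {1..m}"
    then have [measurable]: "Y r \<in> measurable M (count_space UNIV)" using Y_meas[OF M indep] by auto
    show "(\<lambda>\<omega>. (1/2::real) ^ r * of_bool (Y r \<omega>)) \<in> borel_measurable M" by measurable
  qed
  then show ?thesis unfolding Spart_def[abs_def] by (intro borel_measurable_sum) auto
qed

lemma prob_Y:
  assumes M: "prob_space M"
    and indep: "prob_space.indep_vars M (\<lambda>_. measure_pmf (bernoulli_pmf (1/2))) Y {1..}"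
    and fair: "\<And>r. r \<ge> 1 \<Longrightarrow> distr M (measure_pmf (bernoulli_pmf (1/2))) (Y r)
                                   = measure_pmf (bernoulli_pmf (1/2))"
    and r: "1 \<le> r"
  shows "measure M {\<omega> \<in> space M. Y r \<omega> = b} = 1/2"
proof -
  have meas: "Y r \<in> measurable M (measure_pmf (bernoulli_pmf (1/2)))"
    using Y_meas[OF M indep r] by simp
  have "measure M {\<omega> \<in> space M. Y r \<omega> = b} = measure M (Y r -` {b} \<inter> space M)"
    by (intro arg_cong[where f="measure M"]) auto
  also have "\<dots> = measure (distr M (measure_pmf (bernoulli_pmf (1/2))) (Y r)) {b}"
    by (rule measure_distr[symmetric, OF meas]) simp
  also have "\<dots> = measure (measure_pmf (bernoulli_pmf (1/2))) {b}" using fair[OF r] by simp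
  also have "\<dots> = 1/2" by (cases b) (simp_all add: measure_pmf_single)
  finally show ?thesis .
qed


lemma indep_step:
  assumes M: "prob_space M"
    and indep: "prob_space.indep_vars M (\<lambda>_. measure_pmf (bernoulli_pmf (1/2))) Y {1..}"
    and I: "I \<in> sets borel"
  shows "measure M {\<omega> \<in> space M. Y (Suc m) \<omega> = b \<and> Spart Y m \<omega> \<in> I}
       = measure M {\<omega> \<in> space M. Y (Suc m) \<omega> = b} * measure M {\<omega> \<in> space M. Spart Y m \<omega> \<in> I}"
proof -
  interpret prob_space M by (rule M)
  let ?B = "measure_pmf (bernoulli_pmf (1/2))"
  define K where "K = (\<lambda>x::bool. if x then {1..m} else {Suc m})"
  define Z where "Z = (\<lambda>j \<omega>. restrict (\<lambda>i. Y i \<omega>) (K j))"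
  have iv: "indep_vars (\<lambda>j. PiM (K j) (\<lambda>_. ?B)) Z UNIV"
    unfolding Z_def by (rule indep_vars_restrict[OF indep]) (auto simp: K_def disjoint_family_on_def)
  define f where "f = (\<lambda>z. \<Sum>r\<in>{1..m}. (1/2::real) ^ r * of_bool (z r))"
  define A where "A = (\<lambda>j. if j then f -` I \<inter> space (PiM {1..m} (\<lambda>_. ?B))
                          else (\<lambda>z. z (Suc m)) -` {b} \<inter> space (PiM {Suc m} (\<lambda>_. ?B)))"
  have fm: "f \<in> borel_measurable (PiM {1..m} (\<lambda>_. ?B))"
  proof -
    have "\<And>r. r \<in> {1..m} \<Longrightarrow> (\<lambda>z. (1/2::real) ^ r * of_bool (z r)) \<in> borel_measurable (PiM {1..m} (\<lambda>_. ?B))"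
    proof -
      fix r assume r: "r \<in> {1..m}"
      have "(\<lambda>z. z r) \<in> measurable (PiM {1..m} (\<lambda>_. ?B)) ?B"
        using r by (rule measurable_component_singleton)
      moreover have "(\<lambda>x. (1/2::real) ^ r * of_bool x) \<in> borel_measurable ?B" by simp
      ultimately show "(\<lambda>z. (1/2::real) ^ r * of_bool (z r)) \<in> borel_measurable (PiM {1..m} (\<lambda>_. ?B))"
        using measurable_compose by blast
    qed
    then show ?thesis unfolding f_def by (intro borel_measurable_sum) auto
  qed
  have A: "A j \<in> sets (PiM (K j) (\<lambda>_. ?B))" for j
  proof (cases j)
    case True
    then show ?thesis using measurable_sets[OF fm I] by (simp add: A_def K_def)
  next
    case False
    have "(\<lambda>z. z (Suc m)) \<in> measurable (PiM {Suc m} (\<lambda>_. ?B)) ?B"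
      by (rule measurable_component_singleton) simp
    then have "(\<lambda>z. z (Suc m)) -` {b} \<inter> space (PiM {Suc m} (\<lambda>_. ?B)) \<in> sets (PiM {Suc m} (\<lambda>_. ?B))"
      by (rule measurable_sets) simp
    then show ?thesis using False by (simp add: A_def K_def)
  qed
  have sp: "restrict (\<lambda>i. Y i \<omega>) S \<in> space (PiM S (\<lambda>_. ?B))" for \<omega> S
    by (simp add: space_PiM)
  have fS: "f (restrict (\<lambda>i. Y i \<omega>) {1..m}) = Spart Y m \<omega>" for \<omega>
    unfolding f_def Spart_def by (intro sum.cong) auto
  have pre1: "Z True -` A True \<inter> space M = {\<omega> \<in> space M. Spart Y m \<omega> \<in> I}"
  proof -
    have "Z True -` A True \<inter> space M = {\<omega> \<in> space M. f (restrict (\<lambda>i. Y i \<omega>) {1..m}) \<in> I}"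
      unfolding A_def Z_def K_def using sp[of _ "{1..m}"] by auto
    then show ?thesis by (simp only: fS)
  qed
  have pre2: "Z False -` A False \<inter> space M = {\<omega> \<in> space M. Y (Suc m) \<omega> = b}"
    unfolding A_def Z_def K_def using sp[of _ "{Suc m}"] by auto
  have "prob (\<Inter>j\<in>UNIV. Z j -` A j \<inter> space M) = (\<Prod>j\<in>UNIV. prob (Z j -` A j \<inter> space M))"
    by (rule indep_varsD[OF iv]) (auto simp: A)
  moreover have "(\<Inter>j\<in>UNIV. Z j -` A j \<inter> space M) = {\<omega> \<in> space M. Y (Suc m) \<omega> = b \<and> Spart Y m \<omega> \<in> I}"
    using pre1 pre2 by (auto simp: UNIV_bool)
  moreover have "(\<Prod>j\<in>UNIV. prob (Z j -` A j \<inter> space M)) = prob {\<omega> \<in> space M. Spart Y m \<omega> \<in> I} * prob {\<omega> \<in> space M. Y (Suc m) \<omega> = b}"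
    using pre1 pre2 by (simp add: UNIV_bool)
  ultimately show ?thesis by simp
qed


lemma interval_bound:
  assumes M: "prob_space M"
    and indep: "prob_space.indep_vars M (\<lambda>_. measure_pmf (bernoulli_pmf (1/2))) Y {1..}"
    and fair: "\<And>r. r \<ge> 1 \<Longrightarrow> distr M (measure_pmf (bernoulli_pmf (1/2))) (Y r)
                                   = measure_pmf (bernoulli_pmf (1/2))"
  shows "measure M {\<omega> \<in> space M. a \<le> Spart Y m \<omega> \<and> Spart Y m \<omega> < a + (1/2)^m} \<le> (1/2)^m"
proof (induction m arbitrary: a)
  case 0
  interpret prob_space M by (rule M)
  show ?case by simp
next
  case (Suc m)
  interpret prob_space M by (rule M)
  define h :: real where "h = (1/2)^Suc m"
  have hm: "(1/2::real)^m = 2*h" unfolding h_def by simp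
  note [measurable] = Y_meas[OF M indep, of "Suc m"] Spart_meas[OF M indep, of m]
  let ?P = "\<lambda>I. measure M {\<omega> \<in> space M. Spart Y m \<omega> \<in> I}"
  let ?U1 = "{\<omega> \<in> space M. Y (Suc m) \<omega> = False \<and> Spart Y m \<omega> \<in> {a..<a+h}}"
  let ?U2 = "{\<omega> \<in> space M. Y (Suc m) \<omega> = True \<and> Spart Y m \<omega> \<in> {a-h..<a}}"
  have sub: "{\<omega> \<in> space M. a \<le> Spart Y (Suc m) \<omega> \<and> Spart Y (Suc m) \<omega> < a + (1/2)^Suc m} \<subseteq> ?U1 \<union> ?U2"
  proof
    fix \<omega> assume "\<omega> \<in> {\<omega> \<in> space M. a \<le> Spart Y (Suc m) \<omega> \<and> Spart Y (Suc m) \<omega> < a + (1/2)^Suc m}"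
    then have w: "\<omega> \<in> space M" "a \<le> Spart Y m \<omega> + h * of_bool (Y (Suc m) \<omega>)"
      "Spart Y m \<omega> + h * of_bool (Y (Suc m) \<omega>) < a + h"
      by (auto simp: Spart_Suc h_def)
    show "\<omega> \<in> ?U1 \<union> ?U2"
      using w by (cases "Y (Suc m) \<omega>") auto
  qed
  have s1: "?U1 \<in> sets M" "?U2 \<in> sets M" by measurable
  have "measure M {\<omega> \<in> space M. a \<le> Spart Y (Suc m) \<omega> \<and> Spart Y (Suc m) \<omega> < a + (1/2)^Suc m}
        \<le> measure M (?U1 \<union> ?U2)"
    using sub s1 by (intro finite_measure_mono) auto
  also have "\<dots> \<le> measure M ?U1 + measure M ?U2"
    using s1 by (intro measure_subadditive) auto
  also have "measure M ?U1 = 1/2 * ?P {a..<a+h}"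
    using indep_step[OF M indep, of "{a..<a+h}" m False] prob_Y[OF M indep fair, of "Suc m" False] by simp
  also have "measure M ?U2 = 1/2 * ?P {a-h..<a}"
    using indep_step[OF M indep, of "{a-h..<a}" m True] prob_Y[OF M indep fair, of "Suc m" True] by simp
  also have "1/2 * ?P {a..<a+h} + 1/2 * ?P {a-h..<a} = 1/2 * (?P {a-h..<a} + ?P {a..<a+h})"
    by simp
  also have "?P {a-h..<a} + ?P {a..<a+h} = ?P ({a-h..<a} \<union> {a..<a+h})"
  proof -
    have d: "{\<omega> \<in> space M. Spart Y m \<omega> \<in> {a-h..<a}} \<inter> {\<omega> \<in> space M. Spart Y m \<omega> \<in> {a..<a+h}} = {}" by auto
    have u: "{\<omega> \<in> space M. Spart Y m \<omega> \<in> {a-h..<a} \<union> {a..<a+h}}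
      = {\<omega> \<in> space M. Spart Y m \<omega> \<in> {a-h..<a}} \<union> {\<omega> \<in> space M. Spart Y m \<omega> \<in> {a..<a+h}}" by auto
    have m1: "{\<omega> \<in> space M. Spart Y m \<omega> \<in> {a-h..<a}} \<in> sets M" "{\<omega> \<in> space M. Spart Y m \<omega> \<in> {a..<a+h}} \<in> sets M"
      by measurable
    show ?thesis unfolding u by (rule finite_measure_Union[OF m1 d, symmetric])
  qed
  also have "?P ({a-h..<a} \<union> {a..<a+h}) \<le> (1/2)^m"
  proof -
    have "{\<omega> \<in> space M. Spart Y m \<omega> \<in> {a-h..<a} \<union> {a..<a+h}}
        \<subseteq> {\<omega> \<in> space M. (a-h) \<le> Spart Y m \<omega> \<and> Spart Y m \<omega> < (a-h) + (1/2)^m}"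
      using hm by auto
    moreover have "{\<omega> \<in> space M. (a-h) \<le> Spart Y m \<omega> \<and> Spart Y m \<omega> < (a-h) + (1/2)^m} \<in> sets M"
      by measurable
    ultimately have "?P ({a-h..<a} \<union> {a..<a+h}) \<le> measure M {\<omega> \<in> space M. (a-h) \<le> Spart Y m \<omega> \<and> Spart Y m \<omega> < (a-h) + (1/2)^m}"
      by (intro finite_measure_mono)
    also have "\<dots> \<le> (1/2)^m" by (rule Suc.IH)
    finally show ?thesis .
  qed
  finally show ?case by simp
qed


lemma geom_bound:
  fixes t :: real
  assumes t: "0 \<le> t"
  shows "(\<Sum>m. ennreal (if (1/2::real)^m < t then (1/2)^m else 0)) \<le> ennreal (2*t)"
proof (cases "t = 0")
  case True
  have "\<And>m. ennreal (if (1/2::real)^m < t then (1/2)^m else 0) = 0" using True by simp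
  then show ?thesis by simp
next
  case False
  then have tp: "0 < t" using t by simp
  obtain n where n: "(1/2::real)^n < t" using real_arch_pow_inv[OF tp, of "1/2"] by auto
  define m0 where "m0 = (LEAST m. (1/2::real)^m < t)"
  have m0: "(1/2::real)^m0 < t" unfolding m0_def using n by (rule LeastI)
  have lo: "\<not> (1/2::real)^m < t" if "m < m0" for m
    using that unfolding m0_def by (rule not_less_Least)
  have hi: "(1/2::real)^m < t" if "m0 \<le> m" for m
  proof -
    have "(1/2::real)^m \<le> (1/2)^m0" using that by (intro power_decreasing) auto
    then show ?thesis using m0 by linarith
  qed
  let ?g = "\<lambda>m. ennreal (if (1/2::real)^m < t then (1/2)^m else 0)"
  have e1: "(\<Sum>m. ?g m) = (\<Sum>k. ?g (k + m0)) + (\<Sum>k<m0. ?g k)"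
    by (rule suminf_offset) (rule summableI)
  have e2: "(\<Sum>k<m0. ?g k) = 0" using lo by simp
  have e3: "(\<Sum>k. ?g (k + m0)) = (\<Sum>k. ennreal ((1/2)^m0 * (1/2)^k))"
  proof (intro suminf_cong)
    fix k
    have "(1/2::real)^(k+m0) < t" by (rule hi) simp
    then show "?g (k + m0) = ennreal ((1/2)^m0 * (1/2)^k)" by (simp add: power_add mult.commute)
  qed
  have e4: "(\<Sum>k. ennreal ((1/2::real)^m0 * (1/2)^k)) = ennreal ((1/2)^m0 * 2)"
  proof (rule suminf_ennreal_eq)
    show "(\<lambda>k. (1/2::real)^m0 * (1/2)^k) sums ((1/2)^m0 * 2)"
      using sums_mult[OF geometric_sums[of "1/2::real"], of "(1/2)^m0"] by simp
  qed simp
  have e5: "ennreal ((1/2::real)^m0 * 2) \<le> ennreal (2*t)" using m0 by (intro ennreal_leI) simp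
  show ?thesis using e1 e2 e3 e4 e5 by simp
qed

lemma enat_le_suminf:
  fixes n :: enat and f :: "nat \<Rightarrow> ennreal"
  assumes "\<And>m. enat m < n \<Longrightarrow> 1 \<le> f m"
  shows "ennreal_of_enat n \<le> (\<Sum>m. f m)"
proof -
  have k: "of_nat k \<le> (\<Sum>m. f m)" if "enat k \<le> n" for k
  proof -
    have "(of_nat k :: ennreal) = (\<Sum>m<k. 1)" by simp
    also have "\<dots> \<le> (\<Sum>m<k. f m)"
    proof (intro sum_mono)
      fix m assume "m \<in> {..<k}"
      then have "enat m < enat k" by simp
      then have "enat m < n" using that by (rule less_le_trans)
      then show "1 \<le> f m" by (rule assms)
    qed
    also have "\<dots> \<le> (\<Sum>m. f m)" by (intro sum_le_suminf summableI) auto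
    finally show ?thesis .
  qed
  show ?thesis
  proof (cases n)
    case (enat k)
    then show ?thesis using k[of k] by simp
  next
    case infinity
    have "(\<Sum>m. f m) = top"
    proof (rule ccontr)
      assume "(\<Sum>m. f m) \<noteq> top"
      then obtain r where r: "(\<Sum>m. f m) = ennreal r" "0 \<le> r" using less_top_ennreal top.not_eq_extremum by blast
      obtain k :: nat where "r < real k" using reals_Archimedean2 by blast
      moreover have "of_nat k \<le> ennreal r" using k[of k] infinity r by simp
      ultimately show False using r(2) by (simp add: ennreal_of_nat_eq_real_of_nat)
    qed
    then show ?thesis by simp
  qed
qed

lemma card_Vball:
  fixes j :: "int ^ 'd"
  shows "real (Suc k) \<le> real (card (Vball j k))"
proof -
  obtain u :: 'd where True by blast
  define g where "g = (\<lambda>t::nat. (\<chi> v. if v = u then j $ v + int t else j $ v) :: int ^ 'd)"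
  have inj: "inj_on g {..k}"
  proof (rule inj_onI)
    fix s t assume "g s = g t"
    then have "g s $ u = g t $ u" by simp
    then show "s = t" by (simp add: g_def)
  qed
  have sub: "g ` {..k} \<subseteq> Vball j k"
  proof
    fix x assume "x \<in> g ` {..k}"
    then obtain t where t: "t \<le> k" "x = g t" by auto
    have "(\<Sum>v\<in>UNIV. \<bar>x $ v - j $ v\<bar>) = (\<Sum>v\<in>UNIV. if v = u then int t else 0)"
      using t by (intro sum.cong) (auto simp: g_def)
    also have "\<dots> = int t" by simp
    finally show "x \<in> Vball j k" using t by (simp add: Vball_def)
  qed
  have fin: "finite (Vball j k)"
  proof -
    have "Vball j k \<subseteq> (\<lambda>f. \<chi> v. f v) ` (PiE UNIV (\<lambda>v. {j $ v - int k .. j $ v + int k}))"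
    proof
      fix x assume x: "x \<in> Vball j k"
      have ab: "\<bar>x $ v - j $ v\<bar> \<le> int k" for v
      proof -
        have "\<bar>x $ v - j $ v\<bar> \<le> (\<Sum>v\<in>UNIV. \<bar>x $ v - j $ v\<bar>)"
          by (rule member_le_sum) auto
        then show ?thesis using x by (simp add: Vball_def)
      qed
      have b: "j $ v - int k \<le> x $ v \<and> x $ v \<le> j $ v + int k" for v
        using ab[of v] unfolding abs_le_iff by linarith
      then have "(\<lambda>v. x $ v) \<in> PiE UNIV (\<lambda>v. {j $ v - int k .. j $ v + int k})"
        by (auto simp: PiE_iff)
      moreover have "x = (\<chi> v. x $ v)" by simp
      ultimately show "x \<in> (\<lambda>f. \<chi> v. f v) ` (PiE UNIV (\<lambda>v. {j $ v - int k .. j $ v + int k}))" by blast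
    qed
    moreover have "finite (PiE (UNIV::'d set) (\<lambda>v. {j $ v - int k .. j $ v + int k}))"
      by (intro finite_PiE) auto
    ultimately show ?thesis using finite_subset by blast
  qed
  have "Suc k = card (g ` {..k})" using inj by (simp add: card_image)
  also have "\<dots> \<le> card (Vball j k)" using sub fin by (intro card_mono)
  finally show ?thesis by simp
qed


lemma suminf_swap_ennreal:
  fixes f :: "nat \<Rightarrow> nat \<Rightarrow> ennreal"
  shows "(\<Sum>i. \<Sum>j. f i j) = (\<Sum>j. \<Sum>i. f i j)"
proof -
  have "(\<Sum>i. \<Sum>j. f i j) = (\<integral>\<^sup>+i. \<integral>\<^sup>+j. f i j \<partial>count_space UNIV \<partial>count_space UNIV)"
    by (simp add: nn_integral_count_space_nat)
  also have "\<dots> = (\<integral>\<^sup>+j. \<integral>\<^sup>+i. f i j \<partial>count_space UNIV \<partial>count_space UNIV)"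
    by (rule nn_integral_count_space_nn_integral) auto
  also have "\<dots> = (\<Sum>j. \<Sum>i. f i j)"
    by (simp add: nn_integral_count_space_nat)
  finally show ?thesis .
qed


lemma tail_sum_bound:
  fixes q :: "int pmf" and j :: "int ^ 'd"
  assumes supq: "set_pmf q \<subseteq> {-1..}"
    and sm: "summable (\<lambda>k::nat. real (card (Vball j k)) * pmf q (int k))"
    and sb: "(\<Sum>k. real (card (Vball j k)) * pmf q (int k)) \<le> c"
  shows "(\<Sum>l. ennreal (1 - theta (pmf q) l)) \<le> 2 + ennreal c"
proof -
  let ?p = "\<lambda>k::nat. pmf q (int k)"
  have o: "(\<Sum>l. ennreal (1 - theta (pmf q) l)) = (\<Sum>l. ennreal (1 - theta (pmf q) (l + 2))) + (\<Sum>l<2. ennreal (1 - theta (pmf q) l))"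
    by (rule suminf_offset) (rule summableI)
  have f2: "(\<Sum>l<2. ennreal (1 - theta (pmf q) l)) = 2"
  proof -
    have "(\<Sum>l<2. ennreal (1 - theta (pmf q) l)) = (\<Sum>l<Suc (Suc 0). ennreal (1 - theta (pmf q) l))"
      by (simp only: numeral_2_eq_2)
    also have "\<dots> = ennreal (1 - theta (pmf q) 0) + ennreal (1 - theta (pmf q) (Suc 0))"
      by simp
    also have "\<dots> = 2" by simp
    finally show ?thesis .
  qed
  have t1: "ennreal (1 - theta (pmf q) (l + 2)) = (\<Sum>k. ennreal (if l \<le> k then ?p k else 0))" for l
  proof -
    have l2: "l + 2 = Suc (Suc l)" by arith
    have "(\<Sum>k. ennreal (?p (k + l))) = ennreal (1 - theta (pmf q) (Suc (Suc l)))"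
      by (rule suminf_ennreal_eq[OF _ theta_tail[OF supq]]) simp
    then have "ennreal (1 - theta (pmf q) (l + 2)) = (\<Sum>k. ennreal (?p (k + l)))"
      unfolding l2 by (rule sym)
    also have "\<dots> = (\<Sum>k. ennreal (if l \<le> k then ?p k else 0))"
    proof -
      have "(\<Sum>k. ennreal (if l \<le> k then ?p k else 0)) =
          (\<Sum>k. ennreal (if l \<le> k + l then ?p (k + l) else 0)) + (\<Sum>k<l. ennreal (if l \<le> k then ?p k else 0))"
        by (rule suminf_offset) (rule summableI)
      also have "(\<Sum>k<l. ennreal (if l \<le> k then ?p k else 0)) = 0" by simp
      finally show ?thesis by simp
    qed
    finally show ?thesis .
  qed
  have "(\<Sum>l. ennreal (1 - theta (pmf q) (l + 2))) = (\<Sum>l. \<Sum>k. ennreal (if l \<le> k then ?p k else 0))"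
    using t1 by simp
  also have "\<dots> = (\<Sum>k. \<Sum>l. ennreal (if l \<le> k then ?p k else 0))"
    by (rule suminf_swap_ennreal)
  also have "\<dots> = (\<Sum>k. ennreal (real (Suc k) * ?p k))"
  proof (intro suminf_cong)
    fix k
    have "(\<Sum>l. ennreal (if l \<le> k then ?p k else 0)) = (\<Sum>l\<in>{..k}. ennreal (if l \<le> k then ?p k else 0))"
      by (rule suminf_finite) auto
    also have "\<dots> = of_nat (Suc k) * ennreal (?p k)" by simp
    also have "\<dots> = ennreal (real (Suc k) * ?p k)"
      by (simp add: ennreal_mult ennreal_of_nat_eq_real_of_nat)
    finally show "(\<Sum>l. ennreal (if l \<le> k then ?p k else 0)) = ennreal (real (Suc k) * ?p k)" .
  qed
  also have "\<dots> \<le> (\<Sum>k. ennreal (real (card (Vball j k)) * ?p k))"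
    by (intro suminf_le summableI ennreal_leI mult_right_mono card_Vball) simp
  also have "\<dots> = ennreal (\<Sum>k. real (card (Vball j k)) * ?p k)"
    by (rule suminf_ennreal2[OF _ sm]) simp
  also have "\<dots> \<le> ennreal c" using sb by (rule ennreal_leI)
  finally show ?thesis using o f2 by (simp add: add.commute add_right_mono)
qed


lemma bound_one:
  fixes q :: "int pmf" and M :: "'a measure" and Y :: "nat \<Rightarrow> 'a \<Rightarrow> bool" and j :: "int ^ 'd"
  assumes supq: "set_pmf q \<subseteq> {-1..}"
    and sm: "summable (\<lambda>k::nat. real (card (Vball j k)) * pmf q (int k))"
    and sb: "(\<Sum>k. real (card (Vball j k)) * pmf q (int k)) \<le> c"
    and c1: "c < 1"
    and M: "prob_space M"
    and indep: "prob_space.indep_vars M (\<lambda>_. measure_pmf (bernoulli_pmf (1/2))) Y {1..}"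
    and fair: "\<And>r. r \<ge> 1 \<Longrightarrow> distr M (measure_pmf (bernoulli_pmf (1/2))) (Y r)
                                   = measure_pmf (bernoulli_pmf (1/2))"
  shows "(\<integral>\<^sup>+ \<omega>. ennreal_of_enat (Ncoin (pmf q) Y \<omega>) \<partial>M) \<le> ennreal 10"
proof -
  interpret prob_space M by (rule M)
  define A where "A m l = {\<omega> \<in> space M. theta (pmf q) l < 1 - (1/2)^m \<and>
      theta (pmf q) l - (1/2)^m \<le> Spart Y m \<omega> \<and> Spart Y m \<omega> < theta (pmf q) l}" for m l
  define B where "B m = {\<omega> \<in> space M. 1 - 2*(1/2)^m \<le> Spart Y m \<omega>}" for m
  define E where "E m = (\<Union>l. A m l) \<union> B m" for m
  note [measurable] = Spart_meas[OF M indep]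
  have Am[measurable]: "A m l \<in> sets M" for m l unfolding A_def by measurable
  have Bm[measurable]: "B m \<in> sets M" for m unfolding B_def by measurable
  have Em[measurable]: "E m \<in> sets M" for m unfolding E_def by measurable
  have pw: "ennreal_of_enat (Ncoin (pmf q) Y \<omega>) \<le> (\<Sum>m. indicator (E m) \<omega>)" if w: "\<omega> \<in> space M" for \<omega>
  proof (rule enat_le_suminf)
    fix m assume lt: "enat m < Ncoin (pmf q) Y \<omega>"
    have "\<omega> \<in> E m"
    proof (cases "m = 0")
      case True then show ?thesis using w by (simp add: E_def B_def Spart_0)
    next
      case False
      then have "1 \<le> m" by simp
      from key_pointwise[OF supq this lt] obtain l where
        l: "Spart Y m \<omega> < theta (pmf q) l" "theta (pmf q) l < Spart Y m \<omega> + (1/2)^m" by blast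
      show ?thesis
      proof (cases "theta (pmf q) l < 1 - (1/2)^m")
        case True then have "\<omega> \<in> A m l" using l w unfolding A_def by simp
        then show ?thesis unfolding E_def by blast
      next
        case False then have "\<omega> \<in> B m" using l w unfolding B_def by simp
        then show ?thesis unfolding E_def by blast
      qed
    qed
    then show "1 \<le> (indicator (E m) \<omega> :: ennreal)" by simp
  qed
  have EA: "emeasure M (A m l) \<le> ennreal (if (1/2)^m < 1 - theta (pmf q) l then (1/2)^m else 0)" for m l
  proof (cases "(1/2::real)^m < 1 - theta (pmf q) l")
    case True
    have "A m l \<subseteq> {\<omega> \<in> space M. (theta (pmf q) l - (1/2)^m) \<le> Spart Y m \<omega> \<and>
              Spart Y m \<omega> < (theta (pmf q) l - (1/2)^m) + (1/2)^m}"
      unfolding A_def by auto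
    then have "measure M (A m l) \<le> measure M {\<omega> \<in> space M. (theta (pmf q) l - (1/2)^m) \<le> Spart Y m \<omega> \<and>
              Spart Y m \<omega> < (theta (pmf q) l - (1/2)^m) + (1/2)^m}"
      by (intro finite_measure_mono) measurable
    also have "\<dots> \<le> (1/2)^m" by (rule interval_bound[OF M indep fair])
    finally show ?thesis using True by (simp add: emeasure_eq_measure ennreal_leI)
  next
    case False then have "A m l = {}" unfolding A_def by auto
    then show ?thesis by simp
  qed
  have EB: "emeasure M (B m) \<le> ennreal (2 * (1/2)^m)" for m
  proof -
    let ?I = "\<lambda>a. {\<omega> \<in> space M. a \<le> Spart Y m \<omega> \<and> Spart Y m \<omega> < a + (1/2)^m}"
    have "B m \<subseteq> ?I (1 - 2*(1/2)^m) \<union> ?I (1 - (1/2)^m)"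
      unfolding B_def using Spart_lt1[of Y m] by auto
    then have "measure M (B m) \<le> measure M (?I (1 - 2*(1/2)^m) \<union> ?I (1 - (1/2)^m))"
      by (intro finite_measure_mono) measurable
    also have "\<dots> \<le> measure M (?I (1 - 2*(1/2)^m)) + measure M (?I (1 - (1/2)^m))"
      by (intro measure_Un_le) measurable
    also have "\<dots> \<le> (1/2)^m + (1/2)^m"
      by (intro add_mono interval_bound[OF M indep fair])
    finally show ?thesis by (simp add: emeasure_eq_measure ennreal_leI)
  qed
  have EE: "emeasure M (E m) \<le> (\<Sum>l. ennreal (if (1/2)^m < 1 - theta (pmf q) l then (1/2)^m else 0))
                                + ennreal (2 * (1/2)^m)" for m
  proof -
    have e1: "emeasure M (E m) \<le> emeasure M (\<Union>l. A m l) + emeasure M (B m)"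
      unfolding E_def by (intro emeasure_subadditive) measurable
    have e2: "emeasure M (\<Union>l. A m l) \<le> (\<Sum>l. emeasure M (A m l))"
      by (intro emeasure_subadditive_countably) auto
    have e3: "(\<Sum>l. emeasure M (A m l)) \<le> (\<Sum>l. ennreal (if (1/2)^m < 1 - theta (pmf q) l then (1/2)^m else 0))"
      by (intro suminf_le summableI EA)
    have "emeasure M (\<Union>l. A m l) + emeasure M (B m) \<le>
       (\<Sum>l. ennreal (if (1/2)^m < 1 - theta (pmf q) l then (1/2)^m else 0)) + ennreal (2 * (1/2)^m)"
      by (intro add_mono order_trans[OF e2 e3] EB)
    with e1 show ?thesis by (rule order_trans)
  qed
  let ?G = "\<lambda>m l. ennreal (if (1/2::real)^m < 1 - theta (pmf q) l then (1/2)^m else 0)"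
  have i1: "(\<integral>\<^sup>+ \<omega>. ennreal_of_enat (Ncoin (pmf q) Y \<omega>) \<partial>M) \<le> (\<integral>\<^sup>+ \<omega>. (\<Sum>m. indicator (E m) \<omega>) \<partial>M)"
    using pw by (intro nn_integral_mono) auto
  have i2: "(\<integral>\<^sup>+ \<omega>. (\<Sum>m. indicator (E m) \<omega>) \<partial>M) = (\<Sum>m. emeasure M (E m))"
    by (subst nn_integral_suminf) auto
  have i3: "(\<Sum>m. emeasure M (E m)) \<le> (\<Sum>m. (\<Sum>l. ?G m l) + ennreal (2 * (1/2)^m))"
    by (intro suminf_le summableI EE)
  have i4: "(\<Sum>m. (\<Sum>l. ?G m l) + ennreal (2 * (1/2)^m)) = (\<Sum>m. \<Sum>l. ?G m l) + (\<Sum>m. ennreal (2 * (1/2::real)^m))"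
    by (rule suminf_add[symmetric]) (rule summableI)+
  have i5: "(\<Sum>m. ennreal (2 * (1/2::real)^m)) = ennreal 4"
  proof (rule suminf_ennreal_eq)
    show "(\<lambda>m. 2 * (1/2::real)^m) sums 4"
      using sums_mult[OF geometric_sums[of "1/2::real"], of 2] by simp
  qed simp
  have i6: "(\<Sum>m. \<Sum>l. ?G m l) = (\<Sum>l. \<Sum>m. ?G m l)"
    by (rule suminf_swap_ennreal)
  have i7: "(\<Sum>l. \<Sum>m. ?G m l) \<le> (\<Sum>l. ennreal (2 * (1 - theta (pmf q) l)))"
    by (intro suminf_le summableI geom_bound) (simp add: theta_le1[OF supq])
  have i8: "(\<Sum>l. ennreal (2 * (1 - theta (pmf q) l))) = 2 * (\<Sum>l. ennreal (1 - theta (pmf q) l))"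
  proof -
    have "ennreal (2 * (1 - theta (pmf q) l)) = 2 * ennreal (1 - theta (pmf q) l)" for l
      by (subst ennreal_mult') simp_all
    then show ?thesis by (simp only: ennreal_suminf_cmult)
  qed
  have i9: "2 * (\<Sum>l. ennreal (1 - theta (pmf q) l)) \<le> 2 * (2 + ennreal c)"
    by (intro mult_left_mono tail_sum_bound[OF supq sm sb]) simp
  have fin: "(\<integral>\<^sup>+ \<omega>. ennreal_of_enat (Ncoin (pmf q) Y \<omega>) \<partial>M) \<le> 2 * (2 + ennreal c) + ennreal 4"
  proof -
    have "(\<Sum>m. \<Sum>l. ?G m l) \<le> 2 * (2 + ennreal c)" using i6 i7 i8 i9 by simp
    then have "(\<Sum>m. (\<Sum>l. ?G m l) + ennreal (2 * (1/2)^m)) \<le> 2 * (2 + ennreal c) + ennreal 4"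
      unfolding i4 i5 by (rule add_right_mono)
    then show ?thesis using i1 i2 i3 by simp
  qed
  have "ennreal c \<le> 1" using c1 by (simp add: ennreal_leI)
  then have "2 * (2 + ennreal c) + ennreal 4 \<le> 2 * (2 + 1) + ennreal 4"
    by (intro add_right_mono mult_left_mono add_left_mono) auto
  also have "\<dots> = ennreal 10" by simp
  finally show ?thesis using fin by simp
qed


theorem mainTheorem12:
  fixes lam :: "int ^ 'd \<Rightarrow> int pmf"
    and M :: "'a measure"
    and Y :: "nat \<Rightarrow> 'a \<Rightarrow> bool"
  assumes supp: "\<And>j. set_pmf (lam j) \<subseteq> {-1..}"
    and bound: "\<exists>c<1. \<forall>j. summable (\<lambda>k::nat. real (card (Vball j k)) * pmf (lam j) (int k))
                        \<and> (\<Sum>k. real (card (Vball j k)) * pmf (lam j) (int k)) \<le> c"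
    and M: "prob_space M"
    and indep: "prob_space.indep_vars M (\<lambda>_. measure_pmf (bernoulli_pmf (1/2))) Y {1..}"
    and fair: "\<And>r. r \<ge> 1 \<Longrightarrow> distr M (measure_pmf (bernoulli_pmf (1/2))) (Y r)
                                   = measure_pmf (bernoulli_pmf (1/2))"
  shows "(SUP j. \<integral>\<^sup>+ \<omega>. ennreal_of_enat (Ncoin (pmf (lam j)) Y \<omega>) \<partial>M) < \<infinity>"
proof -
  from bound obtain c where c1: "c < 1" and cb: "\<forall>j. summable (\<lambda>k::nat. real (card (Vball j k)) * pmf (lam j) (int k))
                        \<and> (\<Sum>k. real (card (Vball j k)) * pmf (lam j) (int k)) \<le> c" by blast
  have "(\<integral>\<^sup>+ \<omega>. ennreal_of_enat (Ncoin (pmf (lam j)) Y \<omega>) \<partial>M) \<le> ennreal 10" for j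
    using cb by (intro bound_one[OF supp _ _ c1 M indep fair]) auto
  then have "(SUP j. \<integral>\<^sup>+ \<omega>. ennreal_of_enat (Ncoin (pmf (lam j)) Y \<omega>) \<partial>M) \<le> ennreal 10"
    by (rule SUP_least)
  also have "ennreal 10 < \<infinity>" by simp
  finally show ?thesis .
qed

end
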